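(* Let $1\le p<\infty$ and let $T=M_wEM_u:L^p(\Sigma)\to L^p(\Sigma)$ be a bounded WCE operator. Write $X=\left(\bigcup_{n}A_n\right)\cup B$ where $\{A_n\}$ are pairwise disjoint $\mathcal{A}$-atoms and $B\in\mathcal{A}$ is the non-atomic part. Suppose $(X,\mathcal{A},\mu|_{\mathcal{A}})$ is not purely atomic (i.e. $\mu(B)>0$) and that the restriction of $T$ to the non-atomic part, $f\mapsto T(f\chi_B)$, is a non-zero operator. Then $T$ is not nuclear on $L^p(\Sigma)$.
   Context: $(X,\Sigma,\mu)$ is a complete $\sigma$-finite measure space and $\mathcal{A}\subseteq\Sigma$ is a sub-$\sigma$-algebra such that $(X,\mathcal{A},\mu|_{\mathcal{A}})$ is $\sigma$-finite. $E=E^{\mathcal{A}}$ is the conditional expectation with respect to $\mathcal{A}$. For measurable $w,u$ such that $uf$ is conditionable for all $f\in L^p(\Sigma)$, the WCE operator is $Tf=w\,E(uf)$. An $\mathcal{A}$-atom is a set $A\in\mathcal{A}$ with $\mu(A)>0$ such that every $F\in\mathcal{A}$, $F\subseteq A$, has $\mu(F)=0$ or $\mu(F)=\mu(A)$. Every $\sigma$-finite $(X,\mathcal{A},\mu)$ decomposes uniquely as $X=(\bigcup_n A_n)\cup B$ with $\{A_n\}$ countably many pairwise disjoint $\mathcal{A}$-atoms and $B$ disjoint from them and containing no $\mathcal{A}$-atoms. A bounded operator is nuclear if $Tx=\sum_n f_n(x)y_n$ with $\sum_n\|f_n\|\|y_n\|<\infty$. *)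

theory Defs
  imports "HOL-Analysis.Analysis" "HOL-Probability.Conditional_Expectation"
begin

(* L^p(Sigma) at the level of functions (a.e.-classes are handled through the seminorm) *)
definition lp_space :: "'a measure \<Rightarrow> real \<Rightarrow> ('a \<Rightarrow> real) set" where
  "lp_space M p = {f. f \<in> borel_measurable M \<and> integrable M (\<lambda>x. \<bar>f x\<bar> powr p)}"

definition lp_norm :: "'a measure \<Rightarrow> real \<Rightarrow> ('a \<Rightarrow> real) \<Rightarrow> real" where
  "lp_norm M p f = (\<integral>x. \<bar>f x\<bar> powr p \<partial>M) powr (1 / p)"

definition conditionable :: "'a measure \<Rightarrow> 'a measure \<Rightarrow> ('a \<Rightarrow> real) \<Rightarrow> bool" where
  "conditionable M F g \<longleftrightarrow> g \<in> borel_measurable M \<and>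
     (AE x in M. nn_cond_exp M F (\<lambda>y. ennreal \<bar>g y\<bar>) x < \<infinity>)"

definition wce :: "'a measure \<Rightarrow> 'a measure \<Rightarrow> ('a \<Rightarrow> real) \<Rightarrow> ('a \<Rightarrow> real)
                    \<Rightarrow> ('a \<Rightarrow> real) \<Rightarrow> ('a \<Rightarrow> real)" where
  "wce M F w u f = (\<lambda>x. w x * real_cond_exp M F (\<lambda>y. u y * f y) x)"

definition lp_bounded_operator :: "'a measure \<Rightarrow> real \<Rightarrow> (('a \<Rightarrow> real) \<Rightarrow> ('a \<Rightarrow> real)) \<Rightarrow> bool" where
  "lp_bounded_operator M p T \<longleftrightarrow>
     (\<forall>f \<in> lp_space M p. T f \<in> lp_space M p) \<and>
     (\<exists>C. \<forall>f \<in> lp_space M p. lp_norm M p (T f) \<le> C * lp_norm M p f)"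

definition lp_functional :: "'a measure \<Rightarrow> real \<Rightarrow> (('a \<Rightarrow> real) \<Rightarrow> real) \<Rightarrow> bool" where
  "lp_functional M p \<phi> \<longleftrightarrow>
     (\<forall>f \<in> lp_space M p. \<forall>g \<in> lp_space M p. \<forall>a b :: real.
         \<phi> (\<lambda>x. a * f x + b * g x) = a * \<phi> f + b * \<phi> g) \<and>
     (\<exists>K. \<forall>f \<in> lp_space M p. \<bar>\<phi> f\<bar> \<le> K * lp_norm M p f)"

definition lp_functional_norm :: "'a measure \<Rightarrow> real \<Rightarrow> (('a \<Rightarrow> real) \<Rightarrow> real) \<Rightarrow> real" where
  "lp_functional_norm M p \<phi> = Sup {\<bar>\<phi> f\<bar> | f. f \<in> lp_space M p \<and> lp_norm M p f \<le> 1}"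

definition lp_nuclear :: "'a measure \<Rightarrow> real \<Rightarrow> (('a \<Rightarrow> real) \<Rightarrow> ('a \<Rightarrow> real)) \<Rightarrow> bool" where
  "lp_nuclear M p T \<longleftrightarrow> lp_bounded_operator M p T \<and>
     (\<exists>(\<phi> :: nat \<Rightarrow> ('a \<Rightarrow> real) \<Rightarrow> real) (y :: nat \<Rightarrow> 'a \<Rightarrow> real).
        (\<forall>n. lp_functional M p (\<phi> n)) \<and> (\<forall>n. y n \<in> lp_space M p) \<and>
        summable (\<lambda>n. lp_functional_norm M p (\<phi> n) * lp_norm M p (y n)) \<and>
        (\<forall>f \<in> lp_space M p.
           (\<lambda>N. lp_norm M p (\<lambda>x. T f x - (\<Sum>n<N. \<phi> n f * y n x))) \<longlonglongrightarrow> 0))"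

definition sub_atom :: "'a measure \<Rightarrow> 'a measure \<Rightarrow> 'a set \<Rightarrow> bool" where
  "sub_atom M F A \<longleftrightarrow> A \<in> sets F \<and> emeasure M A > 0 \<and>
     (\<forall>C \<in> sets F. C \<subseteq> A \<longrightarrow> emeasure M C = 0 \<or> emeasure M C = emeasure M A)"

end

theory Submission
  imports Defs
begin


lemma powr_convex_ineq:
  fixes a b t p :: real
  assumes "p \<ge> 1" "a \<ge> 0" "b \<ge> 0" "0 \<le> t" "t \<le> 1"
  shows "(t*a + (1-t)*b) powr p \<le> t * a powr p + (1-t) * b powr p"
proof -
  have le1: "x powr p \<le> x" if "0 \<le> x" "x \<le> 1" for x :: real
    by (metis assms(1) powr_mono' powr_one_gt_zero_iff that(1,2))
  consider "a = 0" | "b = 0" | "a > 0" "b > 0" using assms by linarith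
  then show ?thesis
  proof cases
    case 1
    have "((1-t)*b) powr p = (1-t) powr p * b powr p" using assms by (simp add: powr_mult)
    also have "\<dots> \<le> (1-t) * b powr p" using le1[of "1-t"] assms by (intro mult_right_mono) auto
    finally show ?thesis using 1 assms by simp
  next
    case 2
    have "(t*a) powr p = t powr p * a powr p" using assms by (simp add: powr_mult)
    also have "\<dots> \<le> t * a powr p" using le1[of "t"] assms by (intro mult_right_mono) auto
    finally show ?thesis using 2 assms by simp
  next
    case 3
    have "convex_on {0<..} (\<lambda>x::real. x powr p)" using powr_convex assms(1) .
    then show ?thesis using 3 assms unfolding convex_on_alt by auto
  qed
qed

lemma lp_norm_nonneg: "lp_norm M p f \<ge> 0"
  unfolding lp_norm_def by simp

lemma lp_norm_powr:
  assumes "p > 0"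
  shows "lp_norm M p f powr p = (\<integral>x. \<bar>f x\<bar> powr p \<partial>M)"
proof -
  have "(\<integral>x. \<bar>f x\<bar> powr p \<partial>M) \<ge> 0" by simp
  then show ?thesis unfolding lp_norm_def using assms by (simp add: powr_powr)
qed

lemma lp_norm_eq:
  assumes "p > 0" "X \<ge> 0" "(\<integral>x. \<bar>f x\<bar> powr p \<partial>M) = X powr p"
  shows "lp_norm M p f = X"
  unfolding lp_norm_def assms(3) using assms by (simp add: powr_powr)

lemma lp_norm_le:
  assumes "p > 0" "X \<ge> 0" "(\<integral>x. \<bar>f x\<bar> powr p \<partial>M) \<le> X powr p"
  shows "lp_norm M p f \<le> X"
proof -
  have "lp_norm M p f \<le> (X powr p) powr (1/p)" unfolding lp_norm_def
    using assms by (intro powr_mono2) auto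
  then show ?thesis using assms by (simp add: powr_powr)
qed

lemma lp_norm_ge:
  assumes "p > 0" "X \<ge> 0" "(\<integral>x. \<bar>f x\<bar> powr p \<partial>M) \<ge> X powr p"
  shows "lp_norm M p f \<ge> X"
proof -
  have "lp_norm M p f \<ge> (X powr p) powr (1/p)" unfolding lp_norm_def
    using assms by (intro powr_mono2) auto
  then show ?thesis using assms by (simp add: powr_powr)
qed

lemma lp_zero: "p > 0 \<Longrightarrow> (\<lambda>x. 0) \<in> lp_space M p \<and> lp_norm M p (\<lambda>x. 0) = 0"
  unfolding lp_space_def lp_norm_def by simp

lemma lp_mult_bounded:
  assumes "f \<in> lp_space M p" "\<psi> \<in> borel_measurable M" "\<And>x. \<bar>\<psi> x\<bar> \<le> c" "p > 0"
  shows "(\<lambda>x. \<psi> x * f x) \<in> lp_space M p"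
proof -
  have c: "c \<ge> 0" using assms(3)[of undefined] by simp
  have i: "integrable M (\<lambda>x. c powr p * \<bar>f x\<bar> powr p)" using assms(1) unfolding lp_space_def by simp
  have fm[measurable]: "f \<in> borel_measurable M" using assms(1) unfolding lp_space_def by simp
  note [measurable] = assms(2)
  show ?thesis unfolding lp_space_def
  proof (intro CollectI conjI)
    show "(\<lambda>x. \<psi> x * f x) \<in> borel_measurable M" by measurable
    show "integrable M (\<lambda>x. \<bar>\<psi> x * f x\<bar> powr p)"
    proof (rule Bochner_Integration.integrable_bound[OF i])
      show "(\<lambda>x. \<bar>\<psi> x * f x\<bar> powr p) \<in> borel_measurable M" by measurable
      show "AE x in M. norm (\<bar>\<psi> x * f x\<bar> powr p) \<le> norm (c powr p * \<bar>f x\<bar> powr p)"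
      proof (rule AE_I2)
        fix x
        have "\<bar>\<psi> x * f x\<bar> powr p = \<bar>\<psi> x\<bar> powr p * \<bar>f x\<bar> powr p" by (simp add: abs_mult powr_mult)
        also have "\<dots> \<le> c powr p * \<bar>f x\<bar> powr p" using assms(3)[of x] assms(4)
          by (intro mult_right_mono powr_mono2) auto
        finally show "norm (\<bar>\<psi> x * f x\<bar> powr p) \<le> norm (c powr p * \<bar>f x\<bar> powr p)" by simp
      qed
    qed
  qed
qed

lemma lp_scale:
  assumes "f \<in> lp_space M p" "p > 0"
  shows "(\<lambda>x. c * f x) \<in> lp_space M p" "lp_norm M p (\<lambda>x. c * f x) = \<bar>c\<bar> * lp_norm M p f"
proof -
  show "(\<lambda>x. c * f x) \<in> lp_space M p" using lp_mult_bounded[OF assms(1), of "\<lambda>_. c" "\<bar>c\<bar>"] assms by auto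
  have "(\<integral>x. \<bar>c * f x\<bar> powr p \<partial>M) = (\<integral>x. \<bar>c\<bar> powr p * \<bar>f x\<bar> powr p \<partial>M)"
    by (simp add: abs_mult powr_mult)
  also have "\<dots> = \<bar>c\<bar> powr p * (\<integral>x. \<bar>f x\<bar> powr p \<partial>M)" by simp
  also have "\<dots> = (\<bar>c\<bar> * lp_norm M p f) powr p" using lp_norm_powr[OF assms(2), of M f]
    by (simp add: powr_mult lp_norm_nonneg)
  finally show "lp_norm M p (\<lambda>x. c * f x) = \<bar>c\<bar> * lp_norm M p f"
    using assms by (intro lp_norm_eq) (auto simp: lp_norm_nonneg)
qed

lemma lp_zero_norm_AE:
  assumes "f \<in> lp_space M p" "p > 0" "lp_norm M p f = 0"
  shows "AE x in M. f x = 0"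
proof -
  have i: "integrable M (\<lambda>x. \<bar>f x\<bar> powr p)" using assms(1) unfolding lp_space_def by simp
  have "(\<integral>x. \<bar>f x\<bar> powr p \<partial>M) = 0" using assms(3) unfolding lp_norm_def by simp
  then have "AE x in M. \<bar>f x\<bar> powr p = 0" using integral_nonneg_eq_0_iff_AE[OF i] by simp
  then show ?thesis by eventually_elim simp
qed

lemma minkowski:
  assumes "f \<in> lp_space M p" "g \<in> lp_space M p" "p \<ge> 1"
  shows "(\<lambda>x. f x + g x) \<in> lp_space M p"
        "lp_norm M p (\<lambda>x. f x + g x) \<le> lp_norm M p f + lp_norm M p g"
proof -
  have p0: "p > 0" using assms by simp
  have fm[measurable]: "f \<in> borel_measurable M" using assms(1) unfolding lp_space_def by simp
  have gm[measurable]: "g \<in> borel_measurable M" using assms(2) unfolding lp_space_def by simp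
  have fi: "integrable M (\<lambda>x. \<bar>f x\<bar> powr p)" using assms(1) unfolding lp_space_def by simp
  have gi: "integrable M (\<lambda>x. \<bar>g x\<bar> powr p)" using assms(2) unfolding lp_space_def by simp
  have pt: "\<bar>f x + g x\<bar> powr p \<le> (\<bar>f x\<bar> + \<bar>g x\<bar>) powr p" for x
    using p0 by (intro powr_mono2) auto
  have pt2: "\<bar>f x + g x\<bar> powr p \<le> 2 powr p * (\<bar>f x\<bar> powr p + \<bar>g x\<bar> powr p)" for x
  proof -
    have "(\<bar>f x\<bar> + \<bar>g x\<bar>) powr p = (2 * ((1/2) * \<bar>f x\<bar> + (1 - 1/2) * \<bar>g x\<bar>)) powr p" by simp
    also have "\<dots> = 2 powr p * ((1/2) * \<bar>f x\<bar> + (1 - 1/2) * \<bar>g x\<bar>) powr p"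
      by (subst powr_mult) auto
    also have "\<dots> \<le> 2 powr p * ((1/2) * \<bar>f x\<bar> powr p + (1 - 1/2) * \<bar>g x\<bar> powr p)"
      by (intro mult_left_mono powr_convex_ineq assms(3)) auto
    also have "\<dots> \<le> 2 powr p * (\<bar>f x\<bar> powr p + \<bar>g x\<bar> powr p)"
    proof (rule mult_left_mono)
      have h: "\<And>a b::real. a \<ge> 0 \<Longrightarrow> b \<ge> 0 \<Longrightarrow> 1/2*a + (1-1/2)*b \<le> a + b" by simp
      show "1 / 2 * \<bar>f x\<bar> powr p + (1 - 1 / 2) * \<bar>g x\<bar> powr p \<le> \<bar>f x\<bar> powr p + \<bar>g x\<bar> powr p"
        by (rule h) auto
    qed simp
    finally show ?thesis using pt[of x] by linarith
  qed
  have si: "integrable M (\<lambda>x. \<bar>f x + g x\<bar> powr p)"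
  proof (rule Bochner_Integration.integrable_bound)
    show "integrable M (\<lambda>x. 2 powr p * (\<bar>f x\<bar> powr p + \<bar>g x\<bar> powr p))" using fi gi by auto
    show "(\<lambda>x. \<bar>f x + g x\<bar> powr p) \<in> borel_measurable M" by measurable
    show "AE x in M. norm (\<bar>f x + g x\<bar> powr p) \<le> norm (2 powr p * (\<bar>f x\<bar> powr p + \<bar>g x\<bar> powr p))"
      using pt2 by (intro AE_I2) (simp add: abs_of_nonneg)
  qed
  then show sl: "(\<lambda>x. f x + g x) \<in> lp_space M p" unfolding lp_space_def by auto
  define A where "A = lp_norm M p f"
  define B where "B = lp_norm M p g"
  have A0: "A \<ge> 0" "B \<ge> 0" unfolding A_def B_def by (auto simp: lp_norm_nonneg)
  have IA: "(\<integral>x. \<bar>f x\<bar> powr p \<partial>M) = A powr p" unfolding A_def by (simp add: lp_norm_powr[OF p0])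
  have IB: "(\<integral>x. \<bar>g x\<bar> powr p \<partial>M) = B powr p" unfolding B_def by (simp add: lp_norm_powr[OF p0])
  consider "A = 0" | "B = 0" | "A > 0" "B > 0" using A0 by linarith
  then show "lp_norm M p (\<lambda>x. f x + g x) \<le> lp_norm M p f + lp_norm M p g"
  proof cases
    case 1
    have "AE x in M. f x = 0" using lp_zero_norm_AE[OF assms(1) p0] 1 unfolding A_def by simp
    then have "(\<integral>x. \<bar>f x + g x\<bar> powr p \<partial>M) = (\<integral>x. \<bar>g x\<bar> powr p \<partial>M)"
      by (intro integral_cong_AE) (auto elim: AE_mp)
    then have "lp_norm M p (\<lambda>x. f x + g x) = B" unfolding lp_norm_def B_def by simp
    then show ?thesis using 1 unfolding A_def B_def by simp
  next
    case 2
    have "AE x in M. g x = 0" using lp_zero_norm_AE[OF assms(2) p0] 2 unfolding B_def by simp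
    then have "(\<integral>x. \<bar>f x + g x\<bar> powr p \<partial>M) = (\<integral>x. \<bar>f x\<bar> powr p \<partial>M)"
      by (intro integral_cong_AE) (auto elim: AE_mp)
    then have "lp_norm M p (\<lambda>x. f x + g x) = A" unfolding lp_norm_def A_def by simp
    then show ?thesis using 2 unfolding A_def B_def by simp
  next
    case 3
    define t where "t = A / (A + B)"
    have t01: "0 \<le> t" "t \<le> 1" "1 - t = B / (A + B)" using 3 unfolding t_def by (auto simp: field_simps)
    have ptw: "\<bar>f x + g x\<bar> powr p \<le> (A + B) powr p *
          ((t / A powr p) * \<bar>f x\<bar> powr p + ((1 - t) / B powr p) * \<bar>g x\<bar> powr p)" for x
    proof -
      have ab': "A + B > 0" using 3 by simp
      have e1: "t * (\<bar>f x\<bar> / A) = \<bar>f x\<bar> / (A + B)" using 3 unfolding t_def by simp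
      have e2: "(1 - t) * (\<bar>g x\<bar> / B) = \<bar>g x\<bar> / (A + B)" using 3 unfolding t_def by (simp add: divide_simps)
      have ab: "A + B \<noteq> 0" using 3 by simp
      have "\<bar>f x\<bar> + \<bar>g x\<bar> = (A + B) * (t * (\<bar>f x\<bar> / A) + (1 - t) * (\<bar>g x\<bar> / B))"
        unfolding e1 e2 using ab by (simp add: add_divide_distrib[symmetric])
      then have "(\<bar>f x\<bar> + \<bar>g x\<bar>) powr p = (A + B) powr p * (t * (\<bar>f x\<bar> / A) + (1 - t) * (\<bar>g x\<bar> / B)) powr p"
        using 3 t01 by (simp add: powr_mult)
      also have "\<dots> \<le> (A + B) powr p * (t * (\<bar>f x\<bar> / A) powr p + (1 - t) * (\<bar>g x\<bar> / B) powr p)"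
        using 3 t01 by (intro mult_left_mono powr_convex_ineq assms(3)) auto
      also have "\<dots> = (A + B) powr p *
          ((t / A powr p) * \<bar>f x\<bar> powr p + ((1 - t) / B powr p) * \<bar>g x\<bar> powr p)"
        using 3 by (simp add: powr_divide)
      finally show ?thesis using pt[of x] by linarith
    qed
    have "(\<integral>x. \<bar>f x + g x\<bar> powr p \<partial>M) \<le> (\<integral>x. (A + B) powr p *
          ((t / A powr p) * \<bar>f x\<bar> powr p + ((1 - t) / B powr p) * \<bar>g x\<bar> powr p) \<partial>M)"
      using si fi gi ptw by (intro integral_mono) auto
    also have "\<dots> = (A + B) powr p * ((t / A powr p) * (\<integral>x. \<bar>f x\<bar> powr p \<partial>M)
          + ((1 - t) / B powr p) * (\<integral>x. \<bar>g x\<bar> powr p \<partial>M))"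
      using fi gi by simp
    also have "\<dots> = (A + B) powr p" unfolding IA IB using 3 t01 by simp
    finally have "lp_norm M p (\<lambda>x. f x + g x) \<le> A + B" using 3 p0 by (intro lp_norm_le) auto
    then show ?thesis unfolding A_def B_def .
  qed
qed


lemma lp_diff:
  assumes "f \<in> lp_space M p" "g \<in> lp_space M p" "p \<ge> 1"
  shows "(\<lambda>x. f x - g x) \<in> lp_space M p"
proof -
  have "(\<lambda>x. (-1) * g x) \<in> lp_space M p" by (rule lp_scale(1)) (use assms in auto)
  from minkowski(1)[OF assms(1) this assms(3)] show ?thesis by simp
qed

lemma lp_sum:
  fixes N :: nat
  assumes "\<And>n. n < N \<Longrightarrow> y n \<in> lp_space M p" "p \<ge> 1"
  shows "(\<lambda>x. \<Sum>n<N. c n * y n x) \<in> lp_space M p \<and>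
         lp_norm M p (\<lambda>x. \<Sum>n<N. c n * y n x) \<le> (\<Sum>n<N. \<bar>c n\<bar> * lp_norm M p (y n))"
  using assms(1)
proof (induction N)
  case 0
  then show ?case using lp_zero[of p M] assms(2) by simp
next
  case (Suc N)
  have IH: "(\<lambda>x. \<Sum>n<N. c n * y n x) \<in> lp_space M p \<and>
         lp_norm M p (\<lambda>x. \<Sum>n<N. c n * y n x) \<le> (\<Sum>n<N. \<bar>c n\<bar> * lp_norm M p (y n))"
    using Suc by simp
  have yN: "y N \<in> lp_space M p" using Suc by simp
  have s: "(\<lambda>x. c N * y N x) \<in> lp_space M p" "lp_norm M p (\<lambda>x. c N * y N x) = \<bar>c N\<bar> * lp_norm M p (y N)"
    using lp_scale[OF yN] assms(2) by auto
  note m = minkowski[OF conjunct1[OF IH] s(1) assms(2)]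
  show ?case using m IH s(2) by simp
qed

lemma lp_functional_bound:
  assumes "lp_functional M p \<phi>" "f \<in> lp_space M p" "p \<ge> 1"
  shows "lp_functional_norm M p \<phi> \<ge> 0" "\<bar>\<phi> f\<bar> \<le> lp_functional_norm M p \<phi> * lp_norm M p f"
proof -
  have p0: "p > 0" using assms by simp
  obtain K where K: "\<And>g. g \<in> lp_space M p \<Longrightarrow> \<bar>\<phi> g\<bar> \<le> K * lp_norm M p g"
    using assms(1) unfolding lp_functional_def by blast
  have lin: "\<And>g h a b. g \<in> lp_space M p \<Longrightarrow> h \<in> lp_space M p \<Longrightarrow>
      \<phi> (\<lambda>x. a * g x + b * h x) = a * \<phi> g + b * \<phi> h"
    using assms(1) unfolding lp_functional_def by blast
  define S where "S = {\<bar>\<phi> f\<bar> | f. f \<in> lp_space M p \<and> lp_norm M p f \<le> 1}"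
  have bdd: "bdd_above S"
  proof (rule bdd_aboveI)
    fix s assume "s \<in> S"
    then obtain g where g: "s = \<bar>\<phi> g\<bar>" "g \<in> lp_space M p" "lp_norm M p g \<le> 1" unfolding S_def by blast
    have "s \<le> K * lp_norm M p g" using K g by simp
    also have "\<dots> \<le> max K 0"
      using g(3) lp_norm_nonneg[of M p g]
      by (cases "K \<ge> 0") (auto intro: mult_left_le simp: mult_nonpos_nonneg)
    finally show "s \<le> max K 0" .
  qed
  have z: "\<bar>\<phi> (\<lambda>x. 0)\<bar> \<in> S" unfolding S_def using lp_zero[OF p0, of M] by force
  have nn: "0 \<le> Sup S" using cSup_upper[OF z bdd] by linarith
  then show "lp_functional_norm M p \<phi> \<ge> 0" unfolding lp_functional_norm_def S_def .
  show "\<bar>\<phi> f\<bar> \<le> lp_functional_norm M p \<phi> * lp_norm M p f"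
  proof (cases "lp_norm M p f = 0")
    case True
    then have "\<bar>\<phi> f\<bar> \<le> 0" using K[OF assms(2)] by simp
    then show ?thesis using nn True by simp
  next
    case False
    define r where "r = lp_norm M p f"
    have r0: "r > 0" using False lp_norm_nonneg[of M p f] unfolding r_def by linarith
    define g where "g = (\<lambda>x. (1 / r) * f x)"
    have g: "g \<in> lp_space M p" "lp_norm M p g = 1"
      using lp_scale[OF assms(2) p0, of "1/r"] r0 unfolding g_def r_def by auto
    have ge: "(\<lambda>x. (1/r) * f x + 0 * f x) = g" unfolding g_def by simp
    have "\<phi> (\<lambda>x. (1/r) * f x + 0 * f x) = (1/r) * \<phi> f + 0 * \<phi> f" by (rule lin[OF assms(2) assms(2)])
    then have "\<phi> g = (1/r) * \<phi> f" unfolding ge by simp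
    then have "\<bar>\<phi> g\<bar> = \<bar>\<phi> f\<bar> / r" using r0 by (simp add: abs_mult)
    then have "\<bar>\<phi> f\<bar> / r \<in> S" unfolding S_def using g by (metis (mono_tags, lifting) mem_Collect_eq order_refl)
    then have "\<bar>\<phi> f\<bar> / r \<le> Sup S" using cSup_upper[OF _ bdd] by blast
    then show ?thesis using r0 unfolding r_def lp_functional_norm_def S_def by (simp add: field_simps)
  qed
qed


lemma wce_pull:
  assumes "sigma_finite_subalgebra M F" "\<psi> \<in> borel_measurable F" "\<And>x. \<psi> x \<ge> 0"
    "g \<in> borel_measurable M" "u \<in> borel_measurable M"
  shows "AE x in M. wce M F w u (\<lambda>y. \<psi> y * g y) x = \<psi> x * wce M F w u g x"
proof -
  interpret sigma_finite_subalgebra M F by fact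
  note [measurable] = assms(2,4,5)
  have eq1: "(\<lambda>y. ennreal (u y * (\<psi> y * g y))) = (\<lambda>y. ennreal (\<psi> y) * ennreal (u y * g y))"
    using assms(3) by (intro ext) (simp add: ennreal_mult' mult.left_commute)
  have eq2: "(\<lambda>y. ennreal (- (u y * (\<psi> y * g y)))) = (\<lambda>y. ennreal (\<psi> y) * ennreal (- (u y * g y)))"
    using assms(3) by (intro ext) (simp add: ennreal_mult'[symmetric] mult.left_commute)
  have A1: "AE x in M. ennreal (\<psi> x) * nn_cond_exp M F (\<lambda>y. ennreal (u y * g y)) x
      = nn_cond_exp M F (\<lambda>y. ennreal (\<psi> y) * ennreal (u y * g y)) x"
    by (rule nn_cond_exp_prod) measurable
  have A2: "AE x in M. ennreal (\<psi> x) * nn_cond_exp M F (\<lambda>y. ennreal (- (u y * g y))) x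
      = nn_cond_exp M F (\<lambda>y. ennreal (\<psi> y) * ennreal (- (u y * g y))) x"
    by (rule nn_cond_exp_prod) measurable
  show ?thesis using A1 A2
  proof eventually_elim
    case (elim x)
    have "wce M F w u (\<lambda>y. \<psi> y * g y) x = w x * (enn2real (ennreal (\<psi> x) * nn_cond_exp M F (\<lambda>y. ennreal (u y * g y)) x)
       - enn2real (ennreal (\<psi> x) * nn_cond_exp M F (\<lambda>y. ennreal (- (u y * g y))) x))"
      unfolding wce_def real_cond_exp_def eq1 eq2 elim by simp
    also have "\<dots> = \<psi> x * wce M F w u g x"
      unfolding wce_def real_cond_exp_def using assms(3)[of x]
      by (simp add: enn2real_mult algebra_simps)
    finally show ?case .
  qed
qed


lemma split_nonatomic:
  assumes "sets F \<subseteq> sets M" "\<not> (\<exists>A. sub_atom M F A \<and> A \<subseteq> B)"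
    "G \<in> sets F" "G \<subseteq> B" "emeasure M G > 0"
  shows "\<exists>C \<in> sets F. C \<subseteq> G \<and> emeasure M C > 0 \<and> emeasure M (G - C) > 0"
proof -
  have "\<not> sub_atom M F G" using assms by blast
  then obtain C where C: "C \<in> sets F" "C \<subseteq> G" "emeasure M C \<noteq> 0" "emeasure M C \<noteq> emeasure M G"
    using assms(3,5) unfolding sub_atom_def by blast
  have CM: "C \<in> sets M" "G \<in> sets M" using C assms by auto
  have "emeasure M C + emeasure M (G - C) = emeasure M (C \<union> (G - C))"
    using CM by (intro plus_emeasure) auto
  also have "C \<union> (G - C) = G" using C by auto
  finally have "emeasure M (G - C) \<noteq> 0" using C(4) by auto
  then show ?thesis using C by (auto simp: zero_less_iff_neq_zero)
qed

lemma disjoint_seq: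
  assumes "sets F \<subseteq> sets M" "\<not> (\<exists>A. sub_atom M F A \<and> A \<subseteq> B)"
    "H \<in> sets F" "H \<subseteq> B" "emeasure M H > 0"
  shows "\<exists>G :: nat \<Rightarrow> 'a set. (\<forall>i. G i \<in> sets F \<and> G i \<subseteq> H \<and> emeasure M (G i) > 0) \<and> disjoint_family G"
proof -
  define P where "P = (\<lambda>G. G \<in> sets F \<and> G \<subseteq> H \<and> emeasure M G > 0)"
  have "\<forall>G. \<exists>C. P G \<longrightarrow> (C \<in> sets F \<and> C \<subseteq> G \<and> emeasure M C > 0 \<and> emeasure M (G - C) > 0)"
    using split_nonatomic[OF assms(1,2)] assms(4) unfolding P_def by blast
  then obtain sel where sel: "\<And>G. P G \<Longrightarrow> sel G \<in> sets F \<and> sel G \<subseteq> G \<and> emeasure M (sel G) > 0 \<and> emeasure M (G - sel G) > 0"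
    by metis
  define R where "R = (\<lambda>n. ((\<lambda>G. G - sel G) ^^ n) H)"
  have R0: "R 0 = H" and RS: "\<And>n. R (Suc n) = R n - sel (R n)" unfolding R_def by auto
  have PR: "P (R n)" for n
  proof (induction n)
    case 0 then show ?case using assms unfolding P_def R0 by auto
  next
    case (Suc n)
    have "sel (R n) \<in> sets F" using sel[OF Suc] by blast
    then have "R n - sel (R n) \<in> sets F" using Suc unfolding P_def by auto
    then show ?case using sel[OF Suc] Suc unfolding P_def RS by auto
  qed
  have dec: "R m \<subseteq> R n" if "n \<le> m" for n m
    using that
  proof (induction m)
    case 0 then show ?case by simp
  next
    case (Suc m)
    then show ?case by (cases "n = Suc m") (auto simp: RS)
  qed
  define G where "G = (\<lambda>n. sel (R n))"
  have "G i \<in> sets F \<and> G i \<subseteq> H \<and> emeasure M (G i) > 0" for i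
    using sel[OF PR[of i]] PR[of i] unfolding G_def P_def by auto
  moreover have "disjoint_family G"
    unfolding disjoint_family_on_def
  proof (intro ballI impI)
    fix i j :: nat assume "i \<noteq> j"
    have "G m \<inter> G n = {}" if "n < m" for n m
    proof -
      have "G m \<subseteq> R m" using sel[OF PR[of m]] unfolding G_def by auto
      also have "\<dots> \<subseteq> R (Suc n)" using dec that by auto
      finally show ?thesis unfolding G_def RS by auto
    qed
    then show "G i \<inter> G j = {}" using \<open>i \<noteq> j\<close> by (metis Int_commute linorder_neqE_nat)
  qed
  ultimately show ?thesis by blast
qed



lemma floor_close:
  fixes a b e :: real
  assumes "e > 0" "\<lfloor>a / e\<rfloor> = \<lfloor>b / e\<rfloor>"
  shows "\<bar>a - b\<bar> < e"
proof -
  have 1: "of_int \<lfloor>a / e\<rfloor> \<le> a / e" "a / e < of_int \<lfloor>a / e\<rfloor> + 1"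
    using floor_correct[of "a/e"] by auto
  have 2: "of_int \<lfloor>b / e\<rfloor> \<le> b / e" "b / e < of_int \<lfloor>b / e\<rfloor> + 1"
    using floor_correct[of "b/e"] by auto
  have "\<bar>a / e - b / e\<bar> < 1" using 1 2 assms(2) by linarith
  then have "\<bar>(a - b) / e\<bar> < 1" by (simp add: diff_divide_distrib)
  then have "\<bar>a - b\<bar> / e < 1" using assms(1) by (simp add: abs_divide)
  then show ?thesis using assms(1) by (simp add: divide_less_eq)
qed

lemma floor_range:
  fixes x K :: real
  assumes "\<bar>x\<bar> \<le> K"
  shows "\<lfloor>x\<rfloor> \<in> {-(\<lceil>K\<rceil>+1)..\<lceil>K\<rceil>+1}"
proof -
  have 1: "of_int \<lfloor>x\<rfloor> \<le> x" "x < of_int \<lfloor>x\<rfloor> + 1"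
    using floor_correct[of "x"] by auto
  have 2: "K \<le> of_int \<lceil>K\<rceil>" by (rule le_of_int_ceiling)
  have 3: "x \<le> K" "-K \<le> x" using assms by auto
  have "(of_int \<lfloor>x\<rfloor> :: real) \<le> of_int \<lceil>K\<rceil> + 1" using 1 2 3 by linarith
  then have "(of_int \<lfloor>x\<rfloor> :: real) \<le> of_int (\<lceil>K\<rceil> + 1)" by simp
  moreover have "- of_int \<lceil>K\<rceil> - 1 \<le> (of_int \<lfloor>x\<rfloor> :: real)" using 1 2 3 by linarith
  then have "of_int (-(\<lceil>K\<rceil>+1)) \<le> (of_int \<lfloor>x\<rfloor> :: real)" by simp
  ultimately show ?thesis by (simp only: atLeastAtMost_iff of_int_le_iff)
qed



lemma nuclear_contra:
  fixes T :: "('a \<Rightarrow> real) \<Rightarrow> ('a \<Rightarrow> real)" and f :: "nat \<Rightarrow> 'a \<Rightarrow> real"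
  assumes p: "p \<ge> 1" and nuc: "lp_nuclear M p T"
    and fl: "\<And>i. f i \<in> lp_space M p" and fn: "\<And>i. lp_norm M p (f i) \<le> \<rho>"
    and sep: "\<And>i j. i \<noteq> j \<Longrightarrow> lp_norm M p (T (\<lambda>x. f i x - f j x)) \<ge> 1"
  shows False
proof -
  have p0: "p > 0" using p by simp
  obtain \<phi> y where bnd: "lp_bounded_operator M p T" and phi: "\<And>n. lp_functional M p (\<phi> n)"
    and yl: "\<And>n. y n \<in> lp_space M p"
    and summ: "summable (\<lambda>n. lp_functional_norm M p (\<phi> n) * lp_norm M p (y n))"
    and conv: "\<And>g. g \<in> lp_space M p \<Longrightarrow>
        (\<lambda>N. lp_norm M p (\<lambda>x. T g x - (\<Sum>n<N. \<phi> n g * y n x))) \<longlonglongrightarrow> 0"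
    using nuc unfolding lp_nuclear_def by blast
  have lin: "\<And>n g h a b. g \<in> lp_space M p \<Longrightarrow> h \<in> lp_space M p \<Longrightarrow>
      \<phi> n (\<lambda>x. a * g x + b * h x) = a * \<phi> n g + b * \<phi> n h"
    using phi unfolding lp_functional_def by blast
  have phin0: "lp_functional_norm M p (\<phi> n) \<ge> 0" for n
    using lp_functional_bound(1)[OF phi fl p] .
  define c where "c n = lp_functional_norm M p (\<phi> n) * lp_norm M p (y n)" for n
  have c0: "c n \<ge> 0" for n unfolding c_def by (intro mult_nonneg_nonneg phin0 lp_norm_nonneg)
  have summc: "summable c" using summ unfolding c_def .
  have rho0: "\<rho> \<ge> 0" using fn[of 0] lp_norm_nonneg[of M p "f 0"] by linarith
  define \<epsilon> where "\<epsilon> = 1 / (8 * (\<rho> + 1))"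
  have eps0: "\<epsilon> > 0" unfolding \<epsilon>_def using rho0 by simp
  have "(\<lambda>N. \<Sum>n<N. c n) \<longlonglongrightarrow> suminf c" using summable_LIMSEQ[OF summc] .
  then have "eventually (\<lambda>N. suminf c - \<epsilon> < (\<Sum>n<N. c n)) sequentially"
    by (rule order_tendstoD(1)) (use eps0 in simp)
  then obtain N where N: "suminf c - \<epsilon> < (\<Sum>n<N. c n)" by (auto simp: eventually_sequentially)
  define Y where "Y = (\<Sum>n<N. lp_norm M p (y n))"
  have Y0: "Y \<ge> 0" unfolding Y_def by (simp add: sum_nonneg lp_norm_nonneg)
  define \<eta> where "\<eta> = 1 / (4 * (Y + 1))"
  have eta0: "\<eta> > 0" unfolding \<eta>_def using Y0 by simp
  define P where "P = (\<Sum>n<N. lp_functional_norm M p (\<phi> n))"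
  define K where "K = P * \<rho> / \<eta>"
  define L where "L = \<lceil>K\<rceil> + 1"
  define \<Phi> where "\<Phi> i = restrict (\<lambda>n. \<lfloor>\<phi> n (f i) / \<eta>\<rfloor>) {..<N}" for i
  have \<Phi>in: "\<Phi> i \<in> PiE {..<N} (\<lambda>_. {-L..L})" for i
  proof -
    have "\<lfloor>\<phi> n (f i) / \<eta>\<rfloor> \<in> {-L..L}" if "n < N" for n
    proof -
      have "\<bar>\<phi> n (f i)\<bar> \<le> lp_functional_norm M p (\<phi> n) * lp_norm M p (f i)"
        by (rule lp_functional_bound(2)[OF phi fl p])
      also have "\<dots> \<le> lp_functional_norm M p (\<phi> n) * \<rho>"
        by (intro mult_left_mono fn phin0)
      also have "\<dots> \<le> P * \<rho>" unfolding P_def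
        by (intro mult_right_mono member_le_sum) (use that rho0 phin0 in auto)
      finally have "\<bar>\<phi> n (f i) / \<eta>\<bar> \<le> K" unfolding K_def using eta0
        by (simp add: abs_divide divide_right_mono)
      then show ?thesis unfolding L_def by (rule floor_range)
    qed
    then show ?thesis unfolding \<Phi>_def by (auto simp: PiE_iff)
  qed
  have fin: "finite (range \<Phi>)"
    by (rule finite_subset[OF _ finite_PiE[of "{..<N}" "\<lambda>_. {-L..L}"]]) (use \<Phi>in in auto)
  have "\<not> inj \<Phi>" using finite_imageD[OF fin] infinite_UNIV_nat by blast
  then obtain i j where ij: "i \<noteq> j" "\<Phi> i = \<Phi> j" unfolding inj_def by blast
  have close: "\<bar>\<phi> n (f i) - \<phi> n (f j)\<bar> < \<eta>" if "n < N" for n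
  proof -
    have "\<lfloor>\<phi> n (f i) / \<eta>\<rfloor> = \<lfloor>\<phi> n (f j) / \<eta>\<rfloor>"
      using fun_cong[OF ij(2), of n] that unfolding \<Phi>_def by simp
    then show ?thesis by (rule floor_close[OF eta0])
  qed
  define g where "g = (\<lambda>x. f i x - f j x)"
  have gl: "g \<in> lp_space M p" unfolding g_def using lp_diff fl p by blast
  have geq: "(\<lambda>x. 1 * f i x + (-1) * f j x) = g" unfolding g_def by simp
  have mj: "(\<lambda>x. (-1) * f j x) \<in> lp_space M p" "lp_norm M p (\<lambda>x. (-1) * f j x) = lp_norm M p (f j)"
    using lp_scale[OF fl[of j] p0, of "-1"] by auto
  have "lp_norm M p (\<lambda>x. f i x + (-1) * f j x) \<le> lp_norm M p (f i) + lp_norm M p (\<lambda>x. (-1) * f j x)"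
    by (rule minkowski(2)[OF fl[of i] mj(1) p])
  then have gn: "lp_norm M p g \<le> 2 * \<rho>" using fn[of i] fn[of j] mj(2) unfolding g_def by simp
  have phig: "\<phi> n g = \<phi> n (f i) - \<phi> n (f j)" for n
    using lin[OF fl[of i] fl[of j], of n 1 "-1"] unfolding geq by simp
  have Tl: "T g \<in> lp_space M p" using bnd gl unfolding lp_bounded_operator_def by blast
  have "eventually (\<lambda>m. lp_norm M p (\<lambda>x. T g x - (\<Sum>n<m. \<phi> n g * y n x)) < 1/4) sequentially"
    using order_tendstoD(2)[OF conv[OF gl], of "1/4"] by simp
  then obtain m0 where m0: "\<And>m. m \<ge> m0 \<Longrightarrow> lp_norm M p (\<lambda>x. T g x - (\<Sum>n<m. \<phi> n g * y n x)) < 1/4"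
    by (auto simp: eventually_sequentially)
  define m where "m = max m0 N"
  have mN: "N \<le> m" unfolding m_def by simp
  have mS: "lp_norm M p (\<lambda>x. T g x - (\<Sum>n<m. \<phi> n g * y n x)) < 1/4" using m0 unfolding m_def by simp
  define S where "S = (\<lambda>x. \<Sum>n<m. \<phi> n g * y n x)"
  have Ssum: "S \<in> lp_space M p \<and> lp_norm M p S \<le> (\<Sum>n<m. \<bar>\<phi> n g\<bar> * lp_norm M p (y n))"
    using lp_sum[of m y M p "\<lambda>n. \<phi> n g"] yl p unfolding S_def by blast
  have concat: "sum h {..<m} = sum h {..<N} + sum h {N..<m}" for h :: "nat \<Rightarrow> real"
  proof -
    have "sum h {0..<N} + sum h {N..<m} = sum h {0..<m}"
      by (rule sum.atLeastLessThan_concat) (use mN in auto)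
    then show ?thesis by (simp add: atLeast0LessThan)
  qed
  have split: "(\<Sum>n<m. \<bar>\<phi> n g\<bar> * lp_norm M p (y n)) =
      (\<Sum>n<N. \<bar>\<phi> n g\<bar> * lp_norm M p (y n)) + (\<Sum>n\<in>{N..<m}. \<bar>\<phi> n g\<bar> * lp_norm M p (y n))"
    by (rule concat)
  have s1: "(\<Sum>n<N. \<bar>\<phi> n g\<bar> * lp_norm M p (y n)) \<le> \<eta> * Y"
  proof -
    have "(\<Sum>n<N. \<bar>\<phi> n g\<bar> * lp_norm M p (y n)) \<le> (\<Sum>n<N. \<eta> * lp_norm M p (y n))"
      using close phig by (intro sum_mono mult_right_mono) (auto simp: lp_norm_nonneg less_imp_le)
    then show ?thesis unfolding Y_def by (simp add: sum_distrib_left)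
  qed
  have s2: "(\<Sum>n\<in>{N..<m}. \<bar>\<phi> n g\<bar> * lp_norm M p (y n)) \<le> (\<Sum>n\<in>{N..<m}. 2 * \<rho> * c n)"
  proof (rule sum_mono)
    fix n
    have "\<bar>\<phi> n g\<bar> \<le> lp_functional_norm M p (\<phi> n) * lp_norm M p g"
      by (rule lp_functional_bound(2)[OF phi gl p])
    also have "\<dots> \<le> lp_functional_norm M p (\<phi> n) * (2 * \<rho>)" by (intro mult_left_mono gn phin0)
    finally show "\<bar>\<phi> n g\<bar> * lp_norm M p (y n) \<le> 2 * \<rho> * c n" unfolding c_def
      using lp_norm_nonneg[of M p "y n"]
      by (metis mult.assoc mult.commute mult_right_mono)
  qed
  have s3: "(\<Sum>n\<in>{N..<m}. c n) \<le> \<epsilon>"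
  proof -
    have "(\<Sum>n<m. c n) = (\<Sum>n<N. c n) + (\<Sum>n\<in>{N..<m}. c n)"
      by (rule concat)
    moreover have "(\<Sum>n<m. c n) \<le> suminf c" using sum_le_suminf[OF summc, of "{..<m}"] c0 by simp
    ultimately show ?thesis using N by linarith
  qed
  have s4: "(\<Sum>n\<in>{N..<m}. 2 * \<rho> * c n) \<le> 2 * \<rho> * \<epsilon>"
    using s3 rho0 by (simp add: sum_distrib_left[symmetric] mult_left_mono)
  have e1: "\<eta> * Y < 1/4" unfolding \<eta>_def using Y0 by (simp add: field_simps)
  have e2: "2 * \<rho> * \<epsilon> < 1/4" unfolding \<epsilon>_def using rho0 by (simp add: field_simps)
  have Dl: "(\<lambda>x. T g x - S x) \<in> lp_space M p" using lp_diff[OF Tl conjunct1[OF Ssum] p] .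
  have "lp_norm M p (\<lambda>x. (T g x - S x) + S x) \<le> lp_norm M p (\<lambda>x. T g x - S x) + lp_norm M p S"
    by (rule minkowski(2)[OF Dl conjunct1[OF Ssum] p])
  then have "lp_norm M p (T g) \<le> lp_norm M p (\<lambda>x. T g x - S x) + lp_norm M p S" by simp
  also have "\<dots> < 3/4" using mS Ssum split s1 s2 s4 e1 e2 unfolding S_def by linarith
  finally have "lp_norm M p (T g) < 3/4" .
  moreover have "lp_norm M p (T g) \<ge> 1" using sep[OF ij(1)] unfolding g_def .
  ultimately show False by simp
qed



lemma ennreal_bounds:
  fixes e1 e2 :: ennreal
  assumes "e2 \<noteq> \<infinity>" "e1 \<noteq> 0"
  shows "\<exists>k::nat. e2 \<le> of_nat k \<and> ennreal (1 / real (Suc k)) \<le> e1"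
proof -
  obtain k1 where k1: "e2 < of_nat k1" using ennreal_Ex_less_of_nat assms(1) by (auto simp: top.not_eq_extremum)
  obtain k2 where k2: "ennreal (1 / real (Suc k2)) \<le> e1"
  proof (cases "e1 = \<infinity>")
    case True then show ?thesis using that by simp
  next
    case False
    then obtain r where r: "e1 = ennreal r" "r \<ge> 0" by (cases e1) auto
    then have "r > 0" using assms(2) by (auto simp: less_le)
    then obtain n where "inverse (of_nat (Suc n)) < r" using reals_Archimedean by blast
    then have "ennreal (1 / real (Suc n)) \<le> e1" unfolding r using r
      by (simp add: inverse_eq_divide)
    then show ?thesis using that by blast
  qed
  define k where "k = max k1 k2"
  have "e2 \<le> of_nat k" using k1 unfolding k_def
    by (meson le_less_trans less_imp_le max.cobounded1 of_nat_le_iff order.strict_implies_order order_less_le_trans)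
  moreover have "ennreal (1 / real (Suc k)) \<le> ennreal (1 / real (Suc k2))"
    unfolding k_def by (intro ennreal_leI divide_left_mono) auto
  ultimately show ?thesis using k2 by (meson order_trans)
qed

lemma ennreal_ratio:
  fixes e1 e2 :: ennreal
  assumes "e2 \<le> of_nat k" "ennreal (1 / real (Suc k)) \<le> e1"
  shows "e2 \<le> of_nat (k * Suc k) * e1"
proof -
  have "of_nat (k * Suc k) * ennreal (1 / real (Suc k)) = (of_nat k :: ennreal)"
  proof -
    have "of_nat (k * Suc k) * ennreal (1 / real (Suc k)) = ennreal (real (k * Suc k) * (1 / real (Suc k)))"
      by (metis ennreal_mult' ennreal_of_nat_eq_real_of_nat of_nat_0_le_iff)
    also have "real (k * Suc k) * (1 / real (Suc k)) = real k"
    proof -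
      have "real (Suc k) > 0" by simp
      then show ?thesis by (simp only: of_nat_mult) (simp add: field_simps del: of_nat_Suc)
    qed
    finally show ?thesis by (simp add: ennreal_of_nat_eq_real_of_nat)
  qed
  then have "(of_nat k :: ennreal) \<le> of_nat (k * Suc k) * e1"
    using assms(2) by (metis mult_left_mono zero_le)
  then show ?thesis using assms(1) by (meson order_trans)
qed



theorem corollary2p4:
  fixes M F :: "'a measure" and p :: real and w u :: "'a \<Rightarrow> real"
    and An :: "nat \<Rightarrow> 'a set" and B :: "'a set"
  assumes "complete_measure M" and "sigma_finite_measure M"
    and "sigma_finite_subalgebra M F"
    and "1 \<le> p"
    and "w \<in> borel_measurable M" and "u \<in> borel_measurable M"
    and "\<forall>f \<in> lp_space M p. conditionable M F (\<lambda>x. u x * f x)"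
    and "lp_bounded_operator M p (wce M F w u)"
    and "\<forall>n. sub_atom M F (An n) \<or> An n = {}"
    and "disjoint_family An"
    and "B \<in> sets F" and "B \<inter> (\<Union>n. An n) = {}"
    and "(\<Union>n. An n) \<union> B = space M"
    and "\<not> (\<exists>A. sub_atom M F A \<and> A \<subseteq> B)"
    and "emeasure M B > 0"
    and "\<exists>f \<in> lp_space M p.
           \<not> (AE x in M. wce M F w u (\<lambda>y. f y * indicator B y) x = 0)"
  shows "\<not> lp_nuclear M p (wce M F w u)"
proof
  assume nuc: "lp_nuclear M p (wce M F w u)"
  interpret sigma_finite_subalgebra M F by fact
  define T where "T = wce M F w u"
  have p: "p \<ge> 1" and p0: "p > 0" using assms(4) by auto
  have subM: "sets F \<subseteq> sets M" and spF: "space F = space M" using subalg unfolding subalgebra_def by auto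
  have BF[measurable]: "B \<in> sets F" by fact
  have BM[measurable]: "B \<in> sets M" using subM BF by auto
  have um[measurable]: "u \<in> borel_measurable M" by fact
  have bnd: "\<And>g. g \<in> lp_space M p \<Longrightarrow> T g \<in> lp_space M p"
    using assms(8) unfolding lp_bounded_operator_def T_def by blast
  have pull: "AE x in M. T (\<lambda>y. \<psi> y * g y) x = \<psi> x * T g x"
    if "\<psi> \<in> borel_measurable F" "\<And>x. \<psi> x \<ge> 0" "g \<in> borel_measurable M" for \<psi> g
    unfolding T_def by (rule wce_pull[OF assms(3) that assms(6)])
  obtain f0 where f0l: "f0 \<in> lp_space M p"
      and nz: "\<not> (AE x in M. T (\<lambda>y. f0 y * indicator B y) x = 0)"
    using assms(16) unfolding T_def by blast
  define h where "h = (\<lambda>y. f0 y * indicator B y)"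
  have hl: "h \<in> lp_space M p"
  proof -
    have "(\<lambda>x. indicator B x * f0 x) \<in> lp_space M p"
      by (rule lp_mult_bounded[OF f0l _ _ p0, of _ 1]) (auto simp: indicator_def)
    then show ?thesis unfolding h_def by (simp add: mult.commute)
  qed
  have hm[measurable]: "h \<in> borel_measurable M" using hl unfolding lp_space_def by simp
  define Th where "Th = T h"
  have Thl: "Th \<in> lp_space M p" unfolding Th_def using bnd hl .
  have Thm[measurable]: "Th \<in> borel_measurable M" using Thl unfolding lp_space_def by simp
  define a where "a x = \<bar>Th x\<bar> powr p" for x
  define b where "b x = \<bar>h x\<bar> powr p" for x
  have ai: "integrable M a" using Thl unfolding lp_space_def a_def by simp
  have bi: "integrable M b" using hl unfolding lp_space_def b_def by simp
  have am[measurable]: "a \<in> borel_measurable M" unfolding a_def by measurable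
  have bm[measurable]: "b \<in> borel_measurable M" unfolding b_def by measurable
  have a0: "a x \<ge> 0" "b x \<ge> 0" for x unfolding a_def b_def by auto
  have ThB: "AE x in M. Th x = indicator B x * Th x"
  proof -
    have "(\<lambda>y. indicator B y * h y) = h" unfolding h_def by (auto simp: indicator_def)
    then show ?thesis using pull[of "indicator B" h] unfolding Th_def by (simp add: indicator_def)
  qed
  have posB: "(\<integral>\<^sup>+x. indicator B x * ennreal (a x) \<partial>M) \<noteq> 0"
  proof
    assume "(\<integral>\<^sup>+x. indicator B x * ennreal (a x) \<partial>M) = 0"
    then have "AE x in M. indicator B x * ennreal (a x) = 0"
      by (subst (asm) nn_integral_0_iff_AE) auto
    then have "AE x in M. Th x = 0" using ThB
    proof eventually_elim
      case (elim x)
      show ?case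
      proof (cases "x \<in> B")
        case True
        then have "a x \<le> 0" using elim(1) by (simp add: ennreal_eq_0_iff)
        then have "a x = 0" using a0(1)[of x] by linarith
        then show ?thesis unfolding a_def using p0 by simp
      next
        case False then show ?thesis using elim(2) by simp
      qed
    qed
    then show False using nz unfolding Th_def h_def by simp
  qed
  define e1 where "e1 = nn_cond_exp M F (\<lambda>x. ennreal (a x))"
  define e2 where "e2 = nn_cond_exp M F (\<lambda>x. ennreal (b x))"
  have e1m[measurable]: "e1 \<in> borel_measurable F" "e1 \<in> borel_measurable M" unfolding e1_def by auto
  have e2m[measurable]: "e2 \<in> borel_measurable F" "e2 \<in> borel_measurable M" unfolding e2_def by auto
  have int1: "(\<integral>\<^sup>+x. \<psi> x * e1 x \<partial>M) = (\<integral>\<^sup>+x. \<psi> x * ennreal (a x) \<partial>M)"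
    if "\<psi> \<in> borel_measurable F" for \<psi>
    unfolding e1_def by (rule nn_cond_exp_intg) (use that in auto)
  have int2: "(\<integral>\<^sup>+x. \<psi> x * e2 x \<partial>M) = (\<integral>\<^sup>+x. \<psi> x * ennreal (b x) \<partial>M)"
    if "\<psi> \<in> borel_measurable F" for \<psi>
    unfolding e2_def by (rule nn_cond_exp_intg) (use that in auto)
  have e2fin: "AE x in M. e2 x \<noteq> \<infinity>"
  proof (rule nn_integral_PInf_AE)
    have "(\<integral>\<^sup>+x. e2 x \<partial>M) = (\<integral>\<^sup>+x. 1 * e2 x \<partial>M)" by simp
    also have "\<dots> = (\<integral>\<^sup>+x. 1 * ennreal (b x) \<partial>M)" by (rule int2) simp
    also have "\<dots> = ennreal (\<integral>x. b x \<partial>M)" using nn_integral_eq_integral[OF bi] a0 by simp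
    finally show "integral\<^sup>N M e2 \<noteq> \<infinity>" by simp
  qed simp
  define H where "H k = {x \<in> space F. x \<in> B \<and> e2 x \<le> of_nat k \<and> ennreal (1 / real (Suc k)) \<le> e1 x}" for k :: nat
  have HF[measurable]: "H k \<in> sets F" for k unfolding H_def by measurable
  have HM: "H k \<in> sets M" for k using HF subM by auto
  have HB: "H k \<subseteq> B" for k unfolding H_def by auto
  obtain k where k: "emeasure M (H k) > 0"
  proof (rule ccontr)
    assume "\<not> thesis"
    then have z: "emeasure M (H k) = 0" for k using that by (auto simp: zero_less_iff_neq_zero)
    have "AE x in M. \<forall>k. x \<notin> H k"
      using z HM by (intro AE_all_countable[THEN iffD2] allI AE_not_in null_setsI) auto
    then have "AE x in M. indicator B x * e1 x = 0" using e2fin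
    proof eventually_elim
      case (elim x)
      show ?case
      proof (rule ccontr)
        assume ne: "indicator B x * e1 x \<noteq> 0"
        then have xB: "x \<in> B" and "e1 x \<noteq> 0" by (auto simp: indicator_def split: if_splits)
        then obtain k where "e2 x \<le> of_nat k \<and> ennreal (1 / real (Suc k)) \<le> e1 x"
          using ennreal_bounds elim(2) by blast
        moreover have "x \<in> space F" using xB BF sets.sets_into_space by blast
        ultimately have "x \<in> H k" using xB unfolding H_def by auto
        then show False using elim(1) by blast
      qed
    qed
    then have "(\<integral>\<^sup>+x. indicator B x * e1 x \<partial>M) = 0" by (subst nn_integral_0_iff_AE) auto
    moreover have "(\<integral>\<^sup>+x. indicator B x * e1 x \<partial>M) = (\<integral>\<^sup>+x. indicator B x * ennreal (a x) \<partial>M)"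
      by (rule int1) measurable
    ultimately show False using posB by simp
  qed
  define Q where "Q = real (k * Suc k)"
  have Q0: "Q \<ge> 0" unfolding Q_def by simp
  have ex: "\<exists>G::nat\<Rightarrow>'a set. (\<forall>i. G i \<in> sets F \<and> G i \<subseteq> H k \<and> emeasure M (G i) > 0) \<and> disjoint_family G"
    by (rule disjoint_seq[OF subM assms(14) HF HB k])
  obtain G :: "nat \<Rightarrow> 'a set" where G0: "(\<forall>i. G i \<in> sets F \<and> G i \<subseteq> H k \<and> emeasure M (G i) > 0) \<and> disjoint_family G"
    using ex by blast
  have G: "\<And>i. G i \<in> sets F" "\<And>i. G i \<subseteq> H k" "\<And>i. emeasure M (G i) > 0"
    using G0 by auto
  have Gd: "disjoint_family G" using G0 by simp
  have GM[measurable]: "G i \<in> sets M" for i using G(1) subM by auto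
  have GF[measurable]: "G i \<in> sets F" for i using G(1) by auto
  define aG where "aG i = (\<integral>x. indicator (G i) x * a x \<partial>M)" for i
  define bG where "bG i = (\<integral>x. indicator (G i) x * b x \<partial>M)" for i
  have aGi: "integrable M (\<lambda>x. indicator (G i) x * a x)" for i
    using integrable_real_mult_indicator[OF GM ai] by (simp add: mult.commute)
  have bGi: "integrable M (\<lambda>x. indicator (G i) x * b x)" for i
    using integrable_real_mult_indicator[OF GM bi] by (simp add: mult.commute)
  have aGe: "ennreal (aG i) = (\<integral>\<^sup>+x. indicator (G i) x * ennreal (a x) \<partial>M)" for i
  proof -
    have "ennreal (aG i) = (\<integral>\<^sup>+x. ennreal (indicator (G i) x * a x) \<partial>M)"
      unfolding aG_def using nn_integral_eq_integral[OF aGi] a0 by simp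
    also have "\<dots> = (\<integral>\<^sup>+x. indicator (G i) x * ennreal (a x) \<partial>M)"
      by (intro nn_integral_cong) (simp add: indicator_def)
    finally show ?thesis .
  qed
  have bGe: "ennreal (bG i) = (\<integral>\<^sup>+x. indicator (G i) x * ennreal (b x) \<partial>M)" for i
  proof -
    have "ennreal (bG i) = (\<integral>\<^sup>+x. ennreal (indicator (G i) x * b x) \<partial>M)"
      unfolding bG_def using nn_integral_eq_integral[OF bGi] a0 by simp
    also have "\<dots> = (\<integral>\<^sup>+x. indicator (G i) x * ennreal (b x) \<partial>M)"
      by (intro nn_integral_cong) (simp add: indicator_def)
    finally show ?thesis .
  qed
  have aGpos: "aG i > 0" for i
  proof -
    have "0 < ennreal (1 / real (Suc k)) * emeasure M (G i)"
      using G(3)[of i] by (simp add: ennreal_zero_less_mult_iff)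
    also have "\<dots> = (\<integral>\<^sup>+x. ennreal (1 / real (Suc k)) * indicator (G i) x \<partial>M)"
      by (rule nn_integral_cmult_indicator[symmetric]) simp
    also have "\<dots> \<le> (\<integral>\<^sup>+x. indicator (G i) x * e1 x \<partial>M)"
    proof (rule nn_integral_mono)
      fix x assume "x \<in> space M"
      show "ennreal (1 / real (Suc k)) * indicator (G i) x \<le> indicator (G i) x * e1 x"
        using G(2)[of i] unfolding H_def by (auto simp: indicator_def)
    qed
    also have "\<dots> = ennreal (aG i)" unfolding aGe by (rule int1) measurable
    finally show ?thesis by (simp add: ennreal_less_zero_iff)
  qed
  have bGle: "bG i \<le> Q * aG i" for i
  proof -
    have "ennreal (bG i) = (\<integral>\<^sup>+x. indicator (G i) x * e2 x \<partial>M)" unfolding bGe by (rule int2[symmetric]) measurable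
    also have "\<dots> \<le> (\<integral>\<^sup>+x. of_nat (k * Suc k) * (indicator (G i) x * e1 x) \<partial>M)"
    proof (rule nn_integral_mono)
      fix x assume "x \<in> space M"
      show "indicator (G i) x * e2 x \<le> of_nat (k * Suc k) * (indicator (G i) x * e1 x)"
        using G(2)[of i] ennreal_ratio[of "e2 x" k "e1 x"] unfolding H_def by (auto simp: indicator_def)
    qed
    also have "\<dots> = of_nat (k * Suc k) * (\<integral>\<^sup>+x. indicator (G i) x * e1 x \<partial>M)"
      by (rule nn_integral_cmult) measurable
    also have "\<dots> = of_nat (k * Suc k) * ennreal (aG i)" unfolding aGe by (subst int1) auto
    also have "\<dots> = ennreal (Q * aG i)" unfolding Q_def
      by (metis ennreal_mult' ennreal_of_nat_eq_real_of_nat of_nat_0_le_iff)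
    finally show ?thesis using Q0 aGpos[of i] by (simp add: ennreal_le_iff)
  qed
  define \<alpha> where "\<alpha> i = aG i powr (-1/p)" for i
  have \<alpha>0: "\<alpha> i > 0" for i unfolding \<alpha>_def using aGpos[of i] by simp
  have \<alpha>p: "\<alpha> i powr p * aG i = 1" for i
  proof -
    have "\<alpha> i powr p = aG i powr (-1/p * p)" unfolding \<alpha>_def by (simp add: powr_powr)
    also have "-1/p * p = -1" using p0 by simp
    finally show ?thesis using aGpos[of i] by (simp add: powr_minus divide_simps)
  qed
  define \<psi> where "\<psi> i x = \<alpha> i * indicator (G i) x" for i x
  have \<psi>F[measurable]: "\<psi> i \<in> borel_measurable F" for i unfolding \<psi>_def by measurable
  have \<psi>M[measurable]: "\<psi> i \<in> borel_measurable M" for i unfolding \<psi>_def by measurable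
  have \<psi>0: "\<psi> i x \<ge> 0" for i x unfolding \<psi>_def using \<alpha>0[of i] by simp
  have \<psi>b: "\<bar>\<psi> i x\<bar> \<le> \<alpha> i" for i x unfolding \<psi>_def using \<alpha>0[of i] by (simp add: indicator_def)
  define fi where "fi i x = \<psi> i x * h x" for i x
  have fil: "fi i \<in> lp_space M p" for i
    unfolding fi_def[abs_def] by (rule lp_mult_bounded[OF hl \<psi>M \<psi>b p0])
  have fin: "lp_norm M p (fi i) \<le> Q powr (1/p)" for i
  proof (rule lp_norm_le[OF p0])
    have "(\<integral>x. \<bar>fi i x\<bar> powr p \<partial>M) = (\<integral>x. \<alpha> i powr p * (indicator (G i) x * b x) \<partial>M)"
      unfolding fi_def \<psi>_def b_def using \<alpha>0[of i]
      by (intro Bochner_Integration.integral_cong refl) (simp add: indicator_def abs_mult powr_mult)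
    also have "\<dots> = \<alpha> i powr p * bG i" unfolding bG_def by simp
    also have "\<dots> \<le> \<alpha> i powr p * (Q * aG i)" by (intro mult_left_mono bGle) simp
    also have "\<dots> = Q" using \<alpha>p[of i] by (simp add: algebra_simps)
    also have "\<dots> = (Q powr (1/p)) powr p" using Q0 p0 by (simp add: powr_powr)
    finally show "(\<integral>x. \<bar>fi i x\<bar> powr p \<partial>M) \<le> (Q powr (1/p)) powr p" .
  qed simp
  have sep: "lp_norm M p (T (\<lambda>x. fi i x - fi j x)) \<ge> 1" if ij: "i \<noteq> j" for i j
  proof -
    define g where "g = (\<lambda>x. fi i x - fi j x)"
    have gl: "g \<in> lp_space M p" unfolding g_def by (rule lp_diff[OF fil fil p])
    have gm[measurable]: "g \<in> borel_measurable M" using gl unfolding lp_space_def by simp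
    have Tgl: "T g \<in> lp_space M p" using bnd gl .
    have Tgm[measurable]: "T g \<in> borel_measurable M" using Tgl unfolding lp_space_def by simp
    have Tgi: "integrable M (\<lambda>x. \<bar>T g x\<bar> powr p)" using Tgl unfolding lp_space_def by simp
    have dis: "G i \<inter> G j = {}" using Gd ij unfolding disjoint_family_on_def by auto
    have eqf: "(\<lambda>y. indicator (G i) y * g y) = (\<lambda>y. \<psi> i y * h y)"
    proof
      fix y show "indicator (G i) y * g y = \<psi> i y * h y"
        using dis unfolding g_def fi_def \<psi>_def by (auto simp: indicator_def)
    qed
    have P1: "AE x in M. T (\<lambda>y. indicator (G i) y * g y) x = indicator (G i) x * T g x"
      by (rule pull) auto
    have P2: "AE x in M. T (\<lambda>y. \<psi> i y * h y) x = \<psi> i x * Th x"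
      unfolding Th_def by (rule pull) (auto simp: \<psi>0)
    have AEeq: "AE x in M. indicator (G i) x * \<bar>T g x\<bar> powr p = \<alpha> i powr p * (indicator (G i) x * a x)"
      using P1 P2
    proof eventually_elim
      case (elim x)
      then have e: "indicator (G i) x * T g x = \<psi> i x * Th x" unfolding eqf by simp
      show ?case
      proof (cases "x \<in> G i")
        case True
        then have "T g x = \<alpha> i * Th x" using e unfolding \<psi>_def by simp
        then show ?thesis using True \<alpha>0[of i] unfolding a_def by (simp add: abs_mult powr_mult)
      next
        case False then show ?thesis by simp
      qed
    qed
    have "1 = \<alpha> i powr p * aG i" using \<alpha>p[of i] by simp
    also have "\<dots> = (\<integral>x. \<alpha> i powr p * (indicator (G i) x * a x) \<partial>M)" unfolding aG_def by simp
    also have "\<dots> = (\<integral>x. indicator (G i) x * \<bar>T g x\<bar> powr p \<partial>M)"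
      by (rule integral_cong_AE) (use AEeq in \<open>auto elim: AE_mp\<close>)
    also have "\<dots> \<le> (\<integral>x. \<bar>T g x\<bar> powr p \<partial>M)"
    proof (rule integral_mono)
      show "integrable M (\<lambda>x. indicator (G i) x * \<bar>T g x\<bar> powr p)"
        using integrable_real_mult_indicator[OF GM Tgi] by (simp add: mult.commute)
      show "integrable M (\<lambda>x. \<bar>T g x\<bar> powr p)" by (rule Tgi)
      fix x show "indicator (G i) x * \<bar>T g x\<bar> powr p \<le> \<bar>T g x\<bar> powr p" by (simp add: indicator_def)
    qed
    finally have "(\<integral>x. \<bar>T g x\<bar> powr p \<partial>M) \<ge> 1 powr p" by simp
    then have "lp_norm M p (T g) \<ge> 1" by (intro lp_norm_ge[OF p0]) auto
    then show ?thesis unfolding g_def .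
  qed
  have nucT: "lp_nuclear M p T" using nuc unfolding T_def .
  show False by (rule nuclear_contra[OF p nucT fil fin sep])

qed

end
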